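(* Let $\Pi=(\mathsf A,\mathsf B)$ be a protocol with $\mathrm{val}(\Pi)<1$. Then $\mathrm{Best}_{\mathsf B}\big(\Pi|_{M^{\mathsf A}_\Pi}\big)=1$.
   Context: An $m$-round single-bit-message protocol $\Pi$ is identified with the complete binary tree of height $m$ (nodes: binary strings of length $\le m$, root $\lambda$), with a control scheme, edge probabilities $e_\Pi(u,ub)$, common output $\chi_\Pi:\text{leaves}\to\{0,1\}$, node-visit probabilities $v_\Pi(u)$, leaf distribution $L_\Pi$ and value $\mathrm{val}(\Pi)=\mathbb E_{L_\Pi}[\chi_\Pi]$. For a node $u$ with $v_\Pi(u)>0$, $\Pi_u$ is the protocol on the subtree rooted at $u$ (conditioned on prefix $u$); otherwise $\Pi_u=\perp$, and expectations over $L_\perp$ are $0$. For a measure $M:\text{leaves}\to[0,1]$, $\mathbb E_{L_{\Pi_u}}[M]$ denotes the expectation of $M$ restricted to leaves under $u$. The $\mathsf A$-dominated measure $M^{\mathsf A}_\Pi$: if $\Pi$ has $0$ rounds with single leaf $\ell$, $M^{\mathsf A}_\Pi(\ell)=\chi_\Pi(\ell)$; otherwise, for a leaf $\ell$ with first bit $b$, writing $\mu_c=\mathbb E_{L_{\Pi_c}}[M^{\mathsf A}_{\Pi_c}]$: $M^{\mathsf A}_\Pi(\ell)=0$ if $e_\Pi(\lambda,b)=0$; $=M^{\mathsf A}_{\Pi_b}(\ell)$ if $e_\Pi(\lambda,b)=1$, or if $e_\Pi(\lambda,b)\in(0,1)$ and ($\mathsf A$ controls the root or $\mu_b\le\mu_{1-b}$);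 $=\frac{\mu_{1-b}}{\mu_b}M^{\mathsf A}_{\Pi_b}(\ell)$ otherwise. Conditional protocol: for $M$ with $\mathbb E_{L_\Pi}[M]<1$, $\Pi|_M$ has the same control scheme and output function as $\Pi$, and edge distribution $e_{\Pi|_M}(u,ub)=0$ if $\mathbb E_{L_{\Pi_u}}[M]=1$, and $e_{\Pi|_M}(u,ub)=e_\Pi(u,ub)\cdot\frac{1-\mathbb E_{L_{\Pi_{ub}}}[M]}{1-\mathbb E_{L_{\Pi_u}}[M]}$ otherwise. A deterministic strategy $\mathsf B'$ for $\mathsf B$ in a protocol $\Pi'$ is valid if $v_{\Pi'}(u)=0\Rightarrow v_{(\mathsf A,\mathsf B')}(u)=0$; $\mathrm{Best}_{\mathsf B}(\Pi')=\max_{\text{valid }\mathsf B'}(1-\mathrm{val}(\mathsf A,\mathsf B'))$. *)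

theory Defs
  imports Main "HOL-Library.Extended_Real"
begin

text \<open>An m-round single-bit-message protocol: nodes are bool lists of length at most m,
  the root is the empty list, leaves are lists of length exactly m.
  ctrl gives the control scheme, edge u b is the probability of the edge from u to u@[b],
  out is the common output on leaves.\<close>

datatype party = PA | PB

record proto =
  rounds :: nat
  ctrl :: "bool list \<Rightarrow> party"
  edge :: "bool list \<Rightarrow> bool \<Rightarrow> real"
  out :: "bool list \<Rightarrow> bool"

definition wf_proto :: "proto \<Rightarrow> bool" where
  "wf_proto P \<longleftrightarrow> (\<forall>u. length u < rounds P \<longrightarrow>
      (\<forall>b. 0 \<le> edge P u b) \<and> edge P u True + edge P u False = 1)"

definition visit :: "proto \<Rightarrow> bool list \<Rightarrow> real" where
  "visit P u = (\<Prod>i<length u. edge P (take i u) (u ! i))"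

definition cpath :: "proto \<Rightarrow> bool list \<Rightarrow> bool list \<Rightarrow> real" where
  "cpath P u w = (\<Prod>i<length w. edge P (u @ take i w) (w ! i))"

text \<open>expectation of M over the leaves under u, w.r.t. the subprotocol rooted at u
  (ignoring whether that subprotocol is bottom)\<close>
definition exp_from :: "proto \<Rightarrow> bool list \<Rightarrow> (bool list \<Rightarrow> real) \<Rightarrow> real" where
  "exp_from P u M = (\<Sum>w\<in>{w. length w = rounds P - length u}. cpath P u w * M (u @ w))"

text \<open>E_{L_{Pi_u}}[M], which is 0 when Pi_u = bottom (v(u) = 0)\<close>
definition exp_at :: "proto \<Rightarrow> bool list \<Rightarrow> (bool list \<Rightarrow> real) \<Rightarrow> real" where
  "exp_at P u M = (if visit P u > 0 then exp_from P u M else 0)"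

definition val :: "proto \<Rightarrow> real" where
  "val P = exp_at P [] (\<lambda>l. of_bool (out P l))"

text \<open>A-dominated measure of the subprotocol rooted at node u with k remaining rounds,
  evaluated at a leaf l (extending u).\<close>
primrec mdomk :: "proto \<Rightarrow> nat \<Rightarrow> bool list \<Rightarrow> bool list \<Rightarrow> real" where
  "mdomk P 0 u l = of_bool (out P l)"
| "mdomk P (Suc k) u l =
     (let b = l ! length u;
          mu = (\<lambda>c. if edge P u c = 0 then 0
                     else (\<Sum>w\<in>{w. length w = k}. cpath P (u @ [c]) w * mdomk P k (u @ [c]) (u @ [c] @ w)))
      in if edge P u b = 0 then 0
         else if edge P u b = 1 then mdomk P k (u @ [b]) l
         else if ctrl P u = PA \<or> mu b \<le> mu (\<not> b) then mdomk P k (u @ [b]) l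
         else (mu (\<not> b) / mu b) * mdomk P k (u @ [b]) l)"

definition mdomA :: "proto \<Rightarrow> bool list \<Rightarrow> real" where
  "mdomA P l = mdomk P (rounds P) [] l"

definition cond_proto :: "proto \<Rightarrow> (bool list \<Rightarrow> real) \<Rightarrow> proto" where
  "cond_proto P M = P\<lparr> edge := (\<lambda>u b. if exp_at P u M = 1 then 0
       else edge P u b * (1 - exp_at P (u @ [b]) M) / (1 - exp_at P u M)) \<rparr>"

text \<open>Execution of (A, B') in protocol P: A plays according to the protocol edges,
  B plays the deterministic strategy B'.\<close>
definition visitAB :: "proto \<Rightarrow> (bool list \<Rightarrow> bool) \<Rightarrow> bool list \<Rightarrow> real" where
  "visitAB P B' u = (\<Prod>i<length u.
       if ctrl P (take i u) = PA then edge P (take i u) (u ! i)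
       else of_bool (B' (take i u) = u ! i))"

definition valAB :: "proto \<Rightarrow> (bool list \<Rightarrow> bool) \<Rightarrow> real" where
  "valAB P B' = (\<Sum>l\<in>{l. length l = rounds P}. visitAB P B' l * of_bool (out P l))"

definition valid_B :: "proto \<Rightarrow> (bool list \<Rightarrow> bool) \<Rightarrow> bool" where
  "valid_B P B' \<longleftrightarrow> (\<forall>u. length u \<le> rounds P \<longrightarrow> visit P u = 0 \<longrightarrow> visitAB P B' u = 0)"

definition BestB :: "proto \<Rightarrow> real" where
  "BestB P = Max {1 - valAB P B' | B'. valid_B P B'}"

end

theory Submission
  imports Defs
begin

lemma prod_snoc:
  "(\<Prod>i<length (u@[b]). g (take i (u@[b])) ((u@[b])!i)) = (\<Prod>i<length u. g (take i u) (u!i)) * g u b"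
proof -
  have "(\<Prod>i<length (u@[b]). g (take i (u@[b])) ((u@[b])!i))
       = (\<Prod>i<length u. g (take i (u@[b])) ((u@[b])!i)) * g u b"
    by simp
  also have "(\<Prod>i<length u. g (take i (u@[b])) ((u@[b])!i)) = (\<Prod>i<length u. g (take i u) (u!i))"
    by (rule prod.cong) (auto simp: nth_append)
  finally show ?thesis .
qed

lemma visit_snoc: "visit P (u@[b]) = visit P u * edge P u b"
  unfolding visit_def by (rule prod_snoc)

lemma visitAB_snoc': "visitAB P B (u@[b]) = visitAB P B u *
   (if ctrl P u = PA then edge P u b else of_bool (B u = b))"
  unfolding visitAB_def by (rule prod_snoc)

lemma cpath_Cons: "cpath P u (c#w) = edge P u c * cpath P (u@[c]) w"
  unfolding cpath_def length_Cons prod.lessThan_Suc_shift by simp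

lemma fin_len: "finite {w::bool list. length w = k}"
  using finite_lists_length_eq[of "UNIV::bool set" k] by simp

lemma sum_len_Suc:
  "(\<Sum>w\<in>{w::bool list. length w = Suc k}. F w) =
   (\<Sum>w\<in>{w. length w = k}. F (True#w)) + (\<Sum>w\<in>{w. length w = k}. F (False#w))"
proof -
  have eq: "{w::bool list. length w = Suc k} = Cons True ` {w. length w = k} \<union> Cons False ` {w. length w = k}"
    by (auto simp: length_Suc_conv image_iff)
  have "(\<Sum>w\<in>{w::bool list. length w = Suc k}. F w) =
     (\<Sum>w\<in>Cons True ` {w. length w = k}. F w) + (\<Sum>w\<in>Cons False ` {w. length w = k}. F w)"
    unfolding eq by (rule sum.union_disjoint) (auto simp: fin_len)
  also have "\<dots> = (\<Sum>w\<in>{w. length w = k}. F (True#w)) + (\<Sum>w\<in>{w. length w = k}. F (False#w))"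
    by (simp add: sum.reindex)
  finally show ?thesis .
qed

lemma cpath_nonneg: "wf_proto P \<Longrightarrow> length u + length w \<le> rounds P \<Longrightarrow> 0 \<le> cpath P u w"
  unfolding cpath_def wf_proto_def by (auto intro!: prod_nonneg)

lemma cpath_sum: "wf_proto P \<Longrightarrow> length u + k \<le> rounds P \<Longrightarrow>
   (\<Sum>w\<in>{w. length w = k}. cpath P u w) = 1"
proof (induction k arbitrary: u)
  case 0
  then show ?case by (simp add: cpath_def)
next
  case (Suc k)
  have e: "edge P u True + edge P u False = 1" using Suc.prems unfolding wf_proto_def by auto
  have "(\<Sum>w\<in>{w. length w = Suc k}. cpath P u w) =
     edge P u True * (\<Sum>w\<in>{w. length w = k}. cpath P (u@[True]) w) +
     edge P u False * (\<Sum>w\<in>{w. length w = k}. cpath P (u@[False]) w)"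
    by (simp add: sum_len_Suc cpath_Cons sum_distrib_left)
  also have "\<dots> = 1" using Suc.IH[of "u@[True]"] Suc.IH[of "u@[False]"] Suc.prems e by simp
  finally show ?case .
qed

lemma exp_from_Suc: "length u < rounds P \<Longrightarrow>
  exp_from P u f = edge P u True * exp_from P (u@[True]) f + edge P u False * exp_from P (u@[False]) f"
proof -
  assume a: "length u < rounds P"
  then have r: "rounds P - length u = Suc (rounds P - length (u@[True]))" by simp
  have r2: "rounds P - length (u@[False]) = rounds P - length (u@[True])" by simp
  show ?thesis
    unfolding exp_from_def r r2 sum_len_Suc
    by (simp add: cpath_Cons sum_distrib_left mult.assoc)
qed

definition muk :: "proto \<Rightarrow> nat \<Rightarrow> bool list \<Rightarrow> bool \<Rightarrow> real" where
  "muk P k u c = (if edge P u c = 0 then 0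
      else (\<Sum>w\<in>{w. length w = k}. cpath P (u @ [c]) w * mdomk P k (u @ [c]) (u @ [c] @ w)))"

definition fac :: "proto \<Rightarrow> nat \<Rightarrow> bool list \<Rightarrow> bool \<Rightarrow> real" where
  "fac P k u b = (if edge P u b = 0 then 0 else if edge P u b = 1 then 1
     else if ctrl P u = PA \<or> muk P k u b \<le> muk P k u (\<not> b) then 1
     else muk P k u (\<not> b) / muk P k u b)"

lemma mdomk_Suc': "mdomk P (Suc k) u l = fac P k u (l ! length u) * mdomk P k (u @ [l ! length u]) l"
  by (simp add: Let_def fac_def muk_def)

lemma fac_bounds: "0 \<le> muk P k u b \<Longrightarrow> 0 \<le> muk P k u (\<not> b) \<Longrightarrow> 0 \<le> fac P k u b \<and> fac P k u b \<le> 1"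
  unfolding fac_def by (auto simp: divide_simps)

lemma mdomk_bounds: "wf_proto P \<Longrightarrow> length u + k \<le> rounds P \<Longrightarrow>
   0 \<le> mdomk P k u l \<and> mdomk P k u l \<le> of_bool (out P l)"
proof (induction k arbitrary: u l)
  case 0
  then show ?case by simp
next
  case (Suc k)
  have mu: "0 \<le> muk P k u c" for c
    unfolding muk_def using Suc.IH[of "u@[c]"] Suc.prems
    by (auto intro!: sum_nonneg mult_nonneg_nonneg cpath_nonneg)
  define b where "b = l ! length u"
  have f: "0 \<le> fac P k u b \<and> fac P k u b \<le> 1" using fac_bounds mu by blast
  have i: "0 \<le> mdomk P k (u@[b]) l \<and> mdomk P k (u@[b]) l \<le> of_bool (out P l)"
    using Suc.IH[of "u@[b]"] Suc.prems by simp
  have "fac P k u b * mdomk P k (u@[b]) l \<le> 1 * mdomk P k (u@[b]) l"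
    using f i by (intro mult_right_mono) auto
  then show ?case unfolding mdomk_Suc' b_def[symmetric] using f i by auto
qed

lemma exp_from_le1: "wf_proto P \<Longrightarrow> length u \<le> rounds P \<Longrightarrow> (\<And>l. f l \<le> 1) \<Longrightarrow> exp_from P u f \<le> 1"
proof -
  assume w: "wf_proto P" and l: "length u \<le> rounds P" and f: "\<And>l. f l \<le> 1"
  have "exp_from P u f \<le> (\<Sum>w\<in>{w. length w = rounds P - length u}. cpath P u w)"
    unfolding exp_from_def
    by (rule sum_mono) (use w l f cpath_nonneg in \<open>auto intro!: mult_left_le\<close>)
  also have "\<dots> = 1" using cpath_sum w l by simp
  finally show ?thesis .
qed

definition mmv :: "proto \<Rightarrow> bool list \<Rightarrow> real" where
  "mmv P u = exp_from P u (mdomk P (rounds P - length u) u)"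

definition Bstrat :: "proto \<Rightarrow> bool list \<Rightarrow> bool" where
  "Bstrat P u = (if edge P u True = 0 then False else if edge P u False = 0 then True
      else mmv P (u@[True]) \<le> mmv P (u@[False]))"

definition agree :: "proto \<Rightarrow> bool list \<Rightarrow> bool" where
  "agree P u = (\<forall>w. length w = rounds P - length u \<longrightarrow>
      mdomA P (u@w) = mdomk P (rounds P - length u) u (u@w))"

lemma muk_eq: "length u < rounds P \<Longrightarrow>
  muk P (rounds P - length u - 1) u c = (if edge P u c = 0 then 0 else mmv P (u@[c]))"
  unfolding muk_def mmv_def exp_from_def by simp

lemma mmv_Suc: "length u < rounds P \<Longrightarrow>
  mmv P u = edge P u True * fac P (rounds P - length u - 1) u True * mmv P (u@[True])
          + edge P u False * fac P (rounds P - length u - 1) u False * mmv P (u@[False])"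
proof -
  assume a: "length u < rounds P"
  define k where "k = rounds P - length u - 1"
  have r: "rounds P - length u = Suc k" using a k_def by simp
  have rc: "rounds P - length (u@[c]) = k" for c using a k_def by simp
  have c: "exp_from P (u@[c]) (mdomk P (Suc k) u) = fac P k u c * mmv P (u@[c])" for c
    unfolding mmv_def exp_from_def rc sum_distrib_left
    by (rule sum.cong) (auto simp del: mdomk.simps(2) simp: mdomk_Suc' nth_append)
  show ?thesis
    unfolding k_def[symmetric] using exp_from_Suc[OF a, of "mdomk P (Suc k) u"] c
    by (simp add: mmv_def r mult.assoc)
qed

lemma agree_step: "agree P u \<Longrightarrow> length u < rounds P \<Longrightarrow> fac P (rounds P - length u - 1) u b = 1 \<Longrightarrow> agree P (u@[b])"
  unfolding agree_def
proof (intro allI impI)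
  fix w :: "bool list"
  assume ag: "\<forall>w. length w = rounds P - length u \<longrightarrow> mdomA P (u @ w) = mdomk P (rounds P - length u) u (u @ w)"
    and a: "length u < rounds P" and f: "fac P (rounds P - length u - 1) u b = 1"
    and w: "length w = rounds P - length (u @ [b])"
  define k where "k = rounds P - length u - 1"
  have r: "rounds P - length u = Suc k" using a k_def by simp
  have "mdomA P ((u@[b])@w) = mdomA P (u @ (b#w))" by simp
  also have "\<dots> = mdomk P (Suc k) u (u@(b#w))" using ag w r by simp
  also have "\<dots> = mdomk P k (u@[b]) ((u@[b])@w)" unfolding mdomk_Suc' using f k_def by simp
  finally show "mdomA P ((u@[b])@w) = mdomk P (rounds P - length (u@[b])) (u@[b]) ((u@[b])@w)"
    using k_def by simp
qed

lemma agree_exp: "agree P u \<Longrightarrow> exp_from P u (mdomA P) = mmv P u"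
  unfolding agree_def exp_from_def mmv_def by (rule sum.cong) auto

lemma mmv_nonneg: "wf_proto P \<Longrightarrow> length u \<le> rounds P \<Longrightarrow> 0 \<le> mmv P u"
  unfolding mmv_def exp_from_def
  by (intro sum_nonneg mult_nonneg_nonneg) (auto intro: cpath_nonneg mdomk_bounds[THEN conjunct1])

lemma Bstep:
  assumes w: "wf_proto P" and a: "length u < rounds P" and c: "ctrl P u = PB"
  shows "0 < edge P u (Bstrat P u) \<and> fac P (rounds P - length u - 1) u (Bstrat P u) = 1
     \<and> mmv P u = mmv P (u @ [Bstrat P u])"
proof -
  define k where "k = rounds P - length u - 1"
  define x where "x = mmv P (u@[True])"
  define y where "y = mmv P (u@[False])"
  have x0: "0 \<le> x" unfolding x_def using mmv_nonneg w a by simp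
  have y0: "0 \<le> y" unfolding y_def using mmv_nonneg w a by simp
  have e: "edge P u True + edge P u False = 1" "0 \<le> edge P u True" "0 \<le> edge P u False"
    using w a unfolding wf_proto_def by auto
  have ms: "mmv P u = edge P u True * fac P k u True * x + edge P u False * fac P k u False * y"
    using mmv_Suc[OF a] unfolding k_def x_def y_def by simp
  have mu: "muk P k u c = (if edge P u c = 0 then 0 else mmv P (u@[c]))" for c
    using muk_eq[OF a] k_def by simp
  show ?thesis
  proof (cases "edge P u True = 0")
    case True
    then have "edge P u False = 1" using e by simp
    then show ?thesis using True ms unfolding Bstrat_def fac_def k_def y_def by simp
  next
    case nT: False
    show ?thesis
    proof (cases "edge P u False = 0")
      case True
      then have "edge P u True = 1" using e by simp
      then show ?thesis using True ms unfolding Bstrat_def fac_def k_def x_def by simp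
    next
      case nF: False
      have n1: "edge P u True \<noteq> 1" "edge P u False \<noteq> 1" using e nT nF by auto
      have fT: "fac P k u True = (if x \<le> y then 1 else y / x)"
        unfolding fac_def mu using nT nF n1 c x_def y_def by simp
      have fF: "fac P k u False = (if y \<le> x then 1 else x / y)"
        unfolding fac_def mu using nT nF n1 c x_def y_def by simp
      have pos: "0 < edge P u True" "0 < edge P u False" using e nT nF by auto
      show ?thesis
      proof (cases "x \<le> y")
        case True
        have "fac P k u False * y = x" unfolding fF using True x0 by auto
        then have "mmv P u = (edge P u True + edge P u False) * x"
          unfolding ms fT using True by (simp add: algebra_simps)
        then show ?thesis using True nT nF pos fT e unfolding Bstrat_def k_def x_def y_def by simp
      next
        case False
        have "fac P k u True * x = y" unfolding fT using False y0 by auto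
        then have "mmv P u = (edge P u True + edge P u False) * y"
          unfolding ms fF using False by (simp add: algebra_simps)
        then show ?thesis using False nT nF pos fF e unfolding Bstrat_def k_def x_def y_def by simp
      qed
    qed
  qed
qed

theorem lemma3p21:
  fixes P :: proto
  assumes "wf_proto P"
    and "val P < 1"
  shows "BestB (cond_proto P (mdomA P)) = 1"
proof -
  define n where "n = rounds P"
  define M where "M = mdomA P"
  define P' where "P' = cond_proto P M"
  define B where "B = Bstrat P"
  have wf: "\<And>u. length u < n \<Longrightarrow> 0 \<le> edge P u c \<and> edge P u True + edge P u False = 1" for c
    using assms(1) unfolding wf_proto_def n_def by auto
  have rP': "rounds P' = n" "ctrl P' = ctrl P" "out P' = out P"
    by (simp_all add: P'_def cond_proto_def n_def)
  have eP': "edge P' u b = (if exp_at P u M = 1 then 0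
      else edge P u b * (1 - exp_at P (u@[b]) M) / (1 - exp_at P u M))" for u b
    by (simp add: P'_def cond_proto_def)
  have Mb: "0 \<le> M l \<and> M l \<le> of_bool (out P l)" for l
    using mdomk_bounds[OF assms(1), of "[]" n l] by (simp add: M_def mdomA_def n_def)
  have M1: "M l \<le> 1" for l using Mb[of l] by (cases "out P l") auto
  have Eat1: "length u \<le> n \<Longrightarrow> exp_at P u M \<le> 1" for u
    unfolding exp_at_def using exp_from_le1[OF assms(1), of u M] M1 n_def by auto
  have vis0: "visit P [] = 1" "visit P' [] = 1" by (simp_all add: visit_def)
  have "exp_from P [] M \<le> exp_from P [] (\<lambda>l. of_bool (out P l))"
    unfolding exp_from_def
  proof (rule sum_mono)
    fix w :: "bool list" assume "w \<in> {w. length w = rounds P - length ([]::bool list)}"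
    then have "0 \<le> cpath P [] w" using cpath_nonneg[OF assms(1), of "[]" w] by simp
    then show "cpath P [] w * M ([] @ w) \<le> cpath P [] w * of_bool (out P ([] @ w))"
      using Mb by (intro mult_left_mono) auto
  qed
  also have "\<dots> = val P" by (simp add: val_def exp_at_def vis0)
  finally have root: "exp_from P [] M < 1" using assms(2) by simp
  have agree0: "agree P []" unfolding agree_def mdomA_def by simp
  have inv: "length u \<le> n \<Longrightarrow> visitAB P' B u \<noteq> 0 \<Longrightarrow>
      agree P u \<and> visit P u > 0 \<and> exp_from P u M < 1 \<and> visit P' u > 0" for u
  proof (induction u rule: rev_induct)
    case Nil
    show ?case using agree0 vis0 root by simp
  next
    case (snoc b u)
    have lu: "length u < n" using snoc.prems by simp
    have g: "visitAB P' B u \<noteq> 0" "(if ctrl P u = PA then edge P' u b else of_bool (B u = b)) \<noteq> 0"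
      using snoc.prems(2) unfolding visitAB_snoc' rP' by auto
    from snoc.IH[OF _ g(1)] lu have ag: "agree P u" and vp: "visit P u > 0"
      and E: "exp_from P u M < 1" and vp': "visit P' u > 0" by auto
    have Eu: "exp_at P u M = exp_from P u M" using vp by (simp add: exp_at_def)
    have key: "edge P u b > 0 \<and> fac P (rounds P - length u - 1) u b = 1 \<and> exp_at P (u@[b]) M < 1"
    proof (cases "ctrl P u = PA")
      case True
      then have ne: "edge P' u b \<noteq> 0" using g by simp
      then have "edge P u b \<noteq> 0" "exp_at P (u@[b]) M \<noteq> 1" using E Eu unfolding eP' by auto
      moreover have "edge P u b \<ge> 0" using wf lu by blast
      moreover have "exp_at P (u@[b]) M \<le> 1" using Eat1 lu by simp
      ultimately show ?thesis using True by (auto simp: fac_def)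
    next
      case False
      then have c: "ctrl P u = PB" by (cases "ctrl P u") auto
      have bB: "b = B u" using g False by simp
      have st: "0 < edge P u b \<and> fac P (rounds P - length u - 1) u b = 1 \<and> mmv P u = mmv P (u @ [b])"
        using Bstep[OF assms(1) _ c] lu bB B_def n_def by simp
      have agb: "agree P (u@[b])" using agree_step[OF ag] st lu n_def by simp
      have "visit P (u@[b]) > 0" using vp st by (simp add: visit_snoc)
      then have "exp_at P (u@[b]) M = exp_from P (u@[b]) M" by (simp add: exp_at_def)
      also have "\<dots> = mmv P (u@[b])" using agree_exp[OF agb] M_def by simp
      also have "\<dots> = mmv P u" using st by simp
      also have "\<dots> = exp_from P u M" using agree_exp[OF ag] M_def by simp
      finally show ?thesis using st E by simp
    qed
    have agb: "agree P (u@[b])" using agree_step[OF ag] key lu n_def by simp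
    have vb: "visit P (u@[b]) > 0" using vp key by (simp add: visit_snoc)
    then have Eb: "exp_at P (u@[b]) M = exp_from P (u@[b]) M" by (simp add: exp_at_def)
    have "edge P' u b > 0" unfolding eP' using key E Eu by (auto intro!: divide_pos_pos)
    then have "visit P' (u@[b]) > 0" using vp' by (simp add: visit_snoc)
    then show ?case using agb vb Eb key by simp
  qed
  have valid: "valid_B P' B"
    unfolding valid_B_def rP' using inv by force
  have val0: "valAB P' B = 0"
    unfolding valAB_def rP'
  proof (rule sum.neutral)
    show "\<forall>l\<in>{l. length l = n}. visitAB P' B l * of_bool (out P l) = 0"
    proof
      fix l :: "bool list" assume l: "l \<in> {l. length l = n}"
      show "visitAB P' B l * of_bool (out P l) = 0"
      proof (cases "visitAB P' B l = 0")
        case False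
        then have "agree P l" "exp_from P l M < 1" using inv[of l] l by auto
        then have "mmv P l < 1" using agree_exp M_def by simp
        moreover have "mmv P l = of_bool (out P l)"
          using l by (simp add: mmv_def exp_from_def n_def cpath_def)
        ultimately show ?thesis by (simp add: rP')
      qed simp
    qed
  qed
  have eP'nn: "length t < n \<Longrightarrow> 0 \<le> edge P' t c" for t c
  proof -
    assume lt: "length t < n"
    have "exp_at P t M \<le> 1" "exp_at P (t@[c]) M \<le> 1" "0 \<le> edge P t c"
      using Eat1 lt wf by auto
    then show ?thesis unfolding eP' by (auto intro!: divide_nonneg_pos mult_nonneg_nonneg)
  qed
  have nonneg: "0 \<le> valAB P' B2" for B2
    unfolding valAB_def visitAB_def rP'
    by (intro sum_nonneg mult_nonneg_nonneg prod_nonneg) (auto intro!: eP'nn)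
  define S where "S = {1 - valAB P' B' | B'. valid_B P' B'}"
  define A where "A = {u::bool list. length u < n}"
  have finA: "finite A"
    by (rule finite_subset[OF _ finite_lists_length_le[of "UNIV::bool set" n]]) (auto simp: A_def)
  have sub: "S \<subseteq> (\<lambda>B'. 1 - valAB P' B') ` ((\<lambda>X u. u \<in> X) ` Pow A)"
  proof
    fix s assume "s \<in> S"
    then obtain B' where s: "s = 1 - valAB P' B'" unfolding S_def by auto
    define X where "X = {u \<in> A. B' u}"
    have "valAB P' B' = valAB P' (\<lambda>u. u \<in> X)"
      unfolding valAB_def visitAB_def rP'
      by (intro sum.cong refl arg_cong2[where f="(*)"] prod.cong) (auto simp: X_def A_def)
    then have e: "s = (\<lambda>B'. 1 - valAB P' B') (\<lambda>u. u \<in> X)" using s by simp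
    have m: "(\<lambda>u. u \<in> X) \<in> (\<lambda>X u. u \<in> X) ` Pow A"
      by (rule image_eqI[where x=X]) (auto simp: X_def)
    show "s \<in> (\<lambda>B'. 1 - valAB P' B') ` ((\<lambda>X u. u \<in> X) ` Pow A)"
      by (rule image_eqI[where f="\<lambda>B'. 1 - valAB P' B'" and x="\<lambda>u. u \<in> X", OF _ m]) (simp add: e)
  qed
  have finS: "finite S" by (rule finite_subset[OF sub]) (simp add: finA)
  have "Max S = 1"
  proof (rule Max_eqI[OF finS])
    fix y assume "y \<in> S" then show "y \<le> 1" unfolding S_def using nonneg by auto
  next
    show "1 \<in> S" unfolding S_def using valid val0 by force
  qed
  then show ?thesis unfolding BestB_def S_def P'_def M_def .
qed

end
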